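(* In the setting described in the context, every $(x_1,x_2,y_1,y_2)\in S(q,\kappa)$ satisfies \[\kappa^2a_1x_2y_1+a_2x_2y_2\equiv 0\pmod q,\] \[2a_2x_1y_1+\kappa^3a_1x_2y_1+3\kappa a_2x_2y_2\equiv 0\pmod{q^2},\] \[5\kappa^2a_1a_2x_1y_1+a_2^2x_1y_2+\kappa^5a_1^2x_2y_1+5\kappa^3a_1a_2x_2y_2\equiv 0\pmod{q^3}.\] Conversely, if $(x_1,x_2,y_1,y_2)\in\mathbb{Z}^4$ satisfies the two congruences \[a_2x_1\equiv\kappa^3a_1x_2\pmod q,\qquad \kappa^2a_1y_1+a_2y_2\equiv 0\pmod q,\] together with the three congruences displayed above, and $r=\gcd(y_1,y_2,q)$, then \[18(a_1x_1^2y_1^3+a_2x_2^2y_2^3)\equiv 0\pmod{q^3r^2}.\]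
   Context: Let $a_1,a_2,a_3$ be non-zero square-free pairwise coprime integers, let $B\ge 2$, and let $X_1,X_2,X_3,Y_1,Y_2,Y_3$ be powers of 2 not exceeding $2B$ with $X_i^2Y_i^3\le 32B/|a_i|$ for $i=1,2,3$. Let $S_0(B)$ be the set of 6-tuples of positive integers $(x_1,x_2,x_3,y_1,y_2,y_3)$ with $\tfrac12X_i<x_i\le X_i$ and $\tfrac12Y_i<y_i\le Y_i$ ($i=1,2,3$), satisfying $a_1x_1^2y_1^3+a_2x_2^2y_2^3+a_3x_3^2y_3^3=0$, $\gcd(x_1y_1,x_2y_2,x_3y_3)=\gcd(a_1a_2a_3,x_1x_2x_3y_1y_2y_3)=1$, and with $a_1y_1,a_2y_2,a_3y_3$ square-free. Let $q$ be a square-free integer with $\tfrac12Y_3<q\le Y_3$ and $\gcd(q,a_1a_2)=1$, and let $\kappa$ be an integer with $\gcd(\kappa,q)=1$. Define $S(q,\kappa)$ as the set of $(x_1,x_2,y_1,y_2)\in\mathbb{Z}^4$ with $x_1y_1+\kappa x_2y_2\equiv 0\pmod q$ such that $(x_1,x_2,x_3,y_1,y_2,q)\in S_0(B)$ for some integer $x_3$. *)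

theory Defs
  imports Complex_Main "HOL-Number_Theory.Number_Theory" "HOL-Computational_Algebra.Squarefree"
begin

definition S0 :: "int \<Rightarrow> int \<Rightarrow> int \<Rightarrow> int \<Rightarrow> int \<Rightarrow> int \<Rightarrow> int \<Rightarrow> int \<Rightarrow> int
    \<Rightarrow> (int \<times> int \<times> int \<times> int \<times> int \<times> int) set" where
  "S0 a1 a2 a3 X1 X2 X3 Y1 Y2 Y3 =
    {(x1, x2, x3, y1, y2, y3).
       0 < x1 \<and> 0 < x2 \<and> 0 < x3 \<and> 0 < y1 \<and> 0 < y2 \<and> 0 < y3 \<and>
       X1 < 2 * x1 \<and> x1 \<le> X1 \<and> X2 < 2 * x2 \<and> x2 \<le> X2 \<and> X3 < 2 * x3 \<and> x3 \<le> X3 \<and>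
       Y1 < 2 * y1 \<and> y1 \<le> Y1 \<and> Y2 < 2 * y2 \<and> y2 \<le> Y2 \<and> Y3 < 2 * y3 \<and> y3 \<le> Y3 \<and>
       a1 * x1^2 * y1^3 + a2 * x2^2 * y2^3 + a3 * x3^2 * y3^3 = 0 \<and>
       gcd (x1 * y1) (gcd (x2 * y2) (x3 * y3)) = 1 \<and>
       gcd (a1 * a2 * a3) (x1 * x2 * x3 * y1 * y2 * y3) = 1 \<and>
       squarefree (a1 * y1) \<and> squarefree (a2 * y2) \<and> squarefree (a3 * y3)}"

definition Sqk :: "int \<Rightarrow> int \<Rightarrow> int \<Rightarrow> int \<Rightarrow> int \<Rightarrow> int \<Rightarrow> int \<Rightarrow> int \<Rightarrow> int
    \<Rightarrow> int \<Rightarrow> int \<Rightarrow> (int \<times> int \<times> int \<times> int) set" where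
  "Sqk a1 a2 a3 X1 X2 X3 Y1 Y2 Y3 q \<kappa> =
    {(x1, x2, y1, y2). [x1 * y1 + \<kappa> * x2 * y2 = 0] (mod q) \<and>
       (\<exists>x3. (x1, x2, x3, y1, y2, q) \<in> S0 a1 a2 a3 X1 X2 X3 Y1 Y2 Y3)}"

end

theory Submission
  imports Defs
begin

lemma part1:
  fixes x1 x2 y1 y2 a1 a2 q k c m :: int
  assumes q0: "q \<noteq> 0" and c1: "coprime (x1*y1) q" and c2: "coprime (x2*y2) q"
    and F0: "a1*x1^2*y1^3 + a2*x2^2*y2^3 = c*q^3"
    and hm: "x1*y1 + k*x2*y2 = q*m"
  shows "q dvd k^2 * a1 * x2 * y1 + a2 * x2 * y2"
    and "q^2 dvd 2 * a2 * x1 * y1 + k^3 * a1 * x2 * y1 + 3 * k * a2 * x2 * y2"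
    and "q^3 dvd 5 * k^2 * a1 * a2 * x1 * y1 + a2^2 * x1 * y2 + k^5 * a1^2 * x2 * y1
           + 5 * k^3 * a1 * a2 * x2 * y2"
proof -
  have e1: "(x2*y2)^2*(k^2*a1*y1+a2*y2) = q*(c*q^2 - a1*y1*(x1*y1-k*x2*y2)*m)"
  proof -
    have "(x2*y2)^2*(k^2*a1*y1+a2*y2) = q*(c*q^2 - a1*y1*(x1*y1-k*x2*y2)*m)
       + (a1*x1^2*y1^3 + a2*x2^2*y2^3 - c*q^3) - a1*y1*(x1*y1-k*x2*y2)*(x1*y1 + k*x2*y2 - q*m)"
      by (Groebner_Basis.algebra)
    thus ?thesis using F0 hm by simp
  qed
  have "coprime ((x2*y2)^2) q" using c2 by simp
  moreover have "q dvd (x2*y2)^2*(k^2*a1*y1+a2*y2)" unfolding e1 by simp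
  ultimately have "q dvd (k^2*a1*y1+a2*y2)" using coprime_dvd_mult_right_iff
    by (metis coprime_commute coprime_dvd_mult_left_iff mult.commute)
  then obtain n where hn: "k^2*a1*y1+a2*y2 = q*n" by blast
  show "q dvd k^2 * a1 * x2 * y1 + a2 * x2 * y2"
  proof -
    have "k^2 * a1 * x2 * y1 + a2 * x2 * y2 = q*(x2*n)" using hn by (Groebner_Basis.algebra)
    thus ?thesis by simp
  qed
  define G where "G = (x2*y2)^2*n - 2*k*a1*y1*(x2*y2)*m + q*a1*y1*m^2"
  have "q*G = q*(q^2*c)" unfolding G_def using F0 hm hn by (Groebner_Basis.algebra)
  hence hG: "G = q^2*c" using q0 by simp
  define H where "H = (x2*y2)*n - 2*k*a1*y1*m"
  have "(x2*y2)*H = q*(q*c - a1*y1*m^2)" using hG unfolding G_def H_def by (Groebner_Basis.algebra)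
  hence "q dvd (x2*y2)*H" by simp
  hence "q dvd H" using c2 by (metis coprime_commute coprime_dvd_mult_right_iff mult.commute)
  then obtain h where hh: "H = q*h" by blast
  have cy2: "coprime y2 q" using c2 by simp
  have cy1: "coprime y1 q" using c1 by simp
  have "y2 * (2 * a2 * x1 * y1 + k^3 * a1 * x2 * y1 + 3 * k * a2 * x2 * y2) = q^2*(k*h + 2*n*m)"
    using hm hn hh unfolding H_def by (Groebner_Basis.algebra)
  hence "q^2 dvd y2 * (2 * a2 * x1 * y1 + k^3 * a1 * x2 * y1 + 3 * k * a2 * x2 * y2)" by simp
  moreover have "coprime y2 (q^2)" using cy2 by simp
  ultimately show "q^2 dvd 2 * a2 * x1 * y1 + k^3 * a1 * x2 * y1 + 3 * k * a2 * x2 * y2"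
    by (metis coprime_commute coprime_dvd_mult_right_iff mult.commute)
  have "(x2*y2)*y1*y2*(5 * k^2 * a1 * a2 * x1 * y1 + a2^2 * x1 * y2 + k^5 * a1^2 * x2 * y1
           + 5 * k^3 * a1 * a2 * x2 * y2) = q^3*(2*k^3*a1*y1*c - k*((x2*y2)*n - k*a1*y1*m)*h + (x2*y2)*m*n^2)"
    using hm hn hh hG unfolding H_def G_def by (Groebner_Basis.algebra)
  hence "q^3 dvd ((x2*y2)*y1*y2)*(5 * k^2 * a1 * a2 * x1 * y1 + a2^2 * x1 * y2 + k^5 * a1^2 * x2 * y1
           + 5 * k^3 * a1 * a2 * x2 * y2)" by simp
  moreover have "coprime ((x2*y2)*y1*y2) (q^3)" using c2 cy1 cy2 by simp
  ultimately show "q^3 dvd 5 * k^2 * a1 * a2 * x1 * y1 + a2^2 * x1 * y2 + k^5 * a1^2 * x2 * y1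
           + 5 * k^3 * a1 * a2 * x2 * y2"
    by (metis coprime_commute coprime_dvd_mult_right_iff mult.commute)
qed


lemma part2q:
  fixes x1 x2 y1 y2 a1 a2 q k m n c2 c3 :: int
  assumes q0: "q \<noteq> 0" and cop: "coprime (k*a1*a2) q"
    and hm: "a2*x1 - k^3*a1*x2 = q*m"
    and hn: "k^2*a1*y1 + a2*y2 = q*n"
    and hc2: "2 * a2 * x1 * y1 + k^3 * a1 * x2 * y1 + 3 * k * a2 * x2 * y2 = q^2*c2"
    and hc3: "5 * k^2 * a1 * a2 * x1 * y1 + a2^2 * x1 * y2 + k^5 * a1^2 * x2 * y1
           + 5 * k^3 * a1 * a2 * x2 * y2 = q^3*c3"
  shows "q^3 dvd 2*(a1*x1^2*y1^3 + a2*x2^2*y2^3)"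
proof -
  define al where "al = k^2*a1*y1"
  define u where "u = k^3*a1*x2"
  define H where "H = 2*al*m + 3*u*n"
  have "q*H = k^2*a1*(2 * a2 * x1 * y1 + k^3 * a1 * x2 * y1 + 3 * k * a2 * x2 * y2)"
    unfolding H_def al_def u_def using hm hn by (Groebner_Basis.algebra)
  also have "\<dots> = q*(q*(k^2*a1*c2))" using hc2 by (simp add: power2_eq_square algebra_simps)
  finally have hH: "H = q*(k^2*a1*c2)" using q0 by simp
  have "q^2*(2*k^2*a1*c2 + m*n) = 5 * k^2 * a1 * a2 * x1 * y1 + a2^2 * x1 * y2 + k^5 * a1^2 * x2 * y1
           + 5 * k^3 * a1 * a2 * x2 * y2"
    using hm hn hH unfolding H_def al_def u_def by (Groebner_Basis.algebra)
  also have "\<dots> = q^2*(q*c3)" using hc3 by (simp add: power2_eq_square power3_eq_cube algebra_simps)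
  finally have h3: "2*k^2*a1*c2 + m*n = q*c3" using q0 by simp
  have "(k^6*a1^2*a2^2)*(2*(a1*x1^2*y1^3 + a2*x2^2*y2^3))
     = q^3*(al^2*u*c3 + al*k^2*a1*c2*(al*m - 2*u*n) + 2*u^2*n^3)"
    using hm hn hH h3 unfolding H_def al_def u_def by (Groebner_Basis.algebra)
  hence "q^3 dvd (k^6*a1^2*a2^2)*(2*(a1*x1^2*y1^3 + a2*x2^2*y2^3))" by simp
  moreover have "coprime (k^6*a1^2*a2^2) (q^3)" using cop by simp
  ultimately show ?thesis
    by (metis coprime_commute coprime_dvd_mult_right_iff mult.commute)
qed

lemma part2r:
  fixes x1 x2 y1 y2 z1 z2 a1 a2 q q' r k m c2 c3 :: int
  assumes r0: "r \<noteq> 0" and cop: "coprime (k*a1*a2) r"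
    and hy1: "y1 = r*z1" and hy2: "y2 = r*z2" and hq: "q = r*q'"
    and hm: "a2*x1 - k^3*a1*x2 = q*m"
    and hc2: "2 * a2 * x1 * y1 + k^3 * a1 * x2 * y1 + 3 * k * a2 * x2 * y2 = q^2*c2"
    and hc3: "5 * k^2 * a1 * a2 * x1 * y1 + a2^2 * x1 * y2 + k^5 * a1^2 * x2 * y1
           + 5 * k^3 * a1 * a2 * x2 * y2 = q^3*c3"
  shows "r^5 dvd 18*(a1*x1^2*y1^3 + a2*x2^2*y2^3)"
proof -
  define al where "al = k^2*a1*z1"
  define u where "u = k^3*a1*x2"
  define Z where "Z = k^2*a1*z1 + a2*z2"
  define M where "M = q'*m"
  define e where "e = q'^2*k^2*a1*c2 - 2*M*al"
  have hX: "a2*x1 = u + r*M" using hm hq unfolding u_def M_def by (simp add: algebra_simps)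
  have "r*(3*u*Z + 2*r*M*al) = k^2*a1*(2 * a2 * x1 * y1 + k^3 * a1 * x2 * y1 + 3 * k * a2 * x2 * y2)"
    using hX unfolding Z_def al_def u_def hy1 hy2 by (Groebner_Basis.algebra)
  also have "\<dots> = r*(r*(q'^2*k^2*a1*c2))" using hc2 hq by (simp add: power2_eq_square algebra_simps)
  finally have "3*u*Z + 2*r*M*al = r*(q'^2*k^2*a1*c2)" using r0 by simp
  hence he: "3*u*Z = r*e" unfolding e_def by (simp add: algebra_simps)
  define g where "g = q'^3*c3"
  have "r*(r*(2*e + M*(4*al+Z))) = r*(6*u*Z + r*M*(4*al + Z))" using he by (simp add: algebra_simps)
  also have "\<dots> = 5 * k^2 * a1 * a2 * x1 * y1 + a2^2 * x1 * y2 + k^5 * a1^2 * x2 * y1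
           + 5 * k^3 * a1 * a2 * x2 * y2"
    using hX unfolding Z_def al_def u_def hy1 hy2 by (Groebner_Basis.algebra)
  also have "\<dots> = r*(r*(r*g))" using hc3 hq unfolding g_def by (simp add: power3_eq_cube algebra_simps)
  finally have hg: "2*e + M*(4*al+Z) = r*g" using r0 by simp
  have "(k^6*a1^2*a2^2)*(18*(a1*x1^2*y1^3 + a2*x2^2*y2^3))
     = r^5*(18*al^3*M^2 + 2*e^2*Z - 6*e^2*al + 9*u*al^2*g - 3*al^2*M*e)"
    unfolding hy1 hy2 using hX he hg unfolding Z_def al_def u_def by (Groebner_Basis.algebra)
  hence "r^5 dvd (k^6*a1^2*a2^2)*(18*(a1*x1^2*y1^3 + a2*x2^2*y2^3))" by simp
  moreover have "coprime (k^6*a1^2*a2^2) (r^5)" using cop by simp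
  ultimately show ?thesis
    by (metis coprime_commute coprime_dvd_mult_right_iff mult.commute)
qed

lemma cop_help:
  fixes A B x3 q k :: int
  assumes g: "gcd A (gcd B (x3*q)) = 1" and d: "q dvd A + k*B" and ck: "coprime k q"
  shows "coprime A q" "coprime B q"
proof -
  have key: "is_unit d" if "d dvd A" "d dvd B" "d dvd q" for d
  proof -
    have "d dvd gcd A (gcd B (x3*q))" using that by simp
    thus ?thesis using g by simp
  qed
  show "coprime A q"
  proof (rule coprimeI)
    fix d assume a: "d dvd A" "d dvd q"
    have "d dvd A + k*B" using d a by (meson dvd_trans)
    hence "d dvd k*B" using a by (simp add: dvd_add_right_iff)
    moreover have "coprime d k" using ck a(2) by (meson coprime_commute coprime_divisors dvd_refl)
    ultimately have "d dvd B" using coprime_dvd_mult_right_iff by blast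
    thus "is_unit d" using key a by blast
  qed
  show "coprime B q"
  proof (rule coprimeI)
    fix d assume a: "d dvd B" "d dvd q"
    have "d dvd A + k*B" using d a by (meson dvd_trans)
    moreover have "d dvd k*B" using a by simp
    ultimately have "d dvd A" by (simp add: dvd_add_left_iff)
    thus "is_unit d" using key a by blast
  qed
qed

theorem lemma13:
  fixes a1 a2 a3 X1 X2 X3 Y1 Y2 Y3 q \<kappa> :: int and B :: real
  assumes a_nz: "a1 \<noteq> 0" "a2 \<noteq> 0" "a3 \<noteq> 0"
    and a_sqf: "squarefree a1" "squarefree a2" "squarefree a3"
    and a_cop: "coprime a1 a2" "coprime a1 a3" "coprime a2 a3"
    and B: "B \<ge> 2"
    and X_pow: "\<exists>k::nat. X1 = 2^k" "\<exists>k::nat. X2 = 2^k" "\<exists>k::nat. X3 = 2^k"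
    and Y_pow: "\<exists>k::nat. Y1 = 2^k" "\<exists>k::nat. Y2 = 2^k" "\<exists>k::nat. Y3 = 2^k"
    and X_le: "real_of_int X1 \<le> 2 * B" "real_of_int X2 \<le> 2 * B" "real_of_int X3 \<le> 2 * B"
    and Y_le: "real_of_int Y1 \<le> 2 * B" "real_of_int Y2 \<le> 2 * B" "real_of_int Y3 \<le> 2 * B"
    and XY: "real_of_int (X1^2 * Y1^3) \<le> 32 * B / real_of_int \<bar>a1\<bar>"
            "real_of_int (X2^2 * Y2^3) \<le> 32 * B / real_of_int \<bar>a2\<bar>"
            "real_of_int (X3^2 * Y3^3) \<le> 32 * B / real_of_int \<bar>a3\<bar>"
    and q_sqf: "squarefree q"
    and q_range: "Y3 < 2 * q" "q \<le> Y3"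
    and q_cop: "gcd q (a1 * a2) = 1"
    and k_cop: "gcd \<kappa> q = 1"
  shows
    "(\<forall>(x1, x2, y1, y2) \<in> Sqk a1 a2 a3 X1 X2 X3 Y1 Y2 Y3 q \<kappa>.
        [\<kappa>^2 * a1 * x2 * y1 + a2 * x2 * y2 = 0] (mod q) \<and>
        [2 * a2 * x1 * y1 + \<kappa>^3 * a1 * x2 * y1 + 3 * \<kappa> * a2 * x2 * y2 = 0] (mod q^2) \<and>
        [5 * \<kappa>^2 * a1 * a2 * x1 * y1 + a2^2 * x1 * y2 + \<kappa>^5 * a1^2 * x2 * y1
           + 5 * \<kappa>^3 * a1 * a2 * x2 * y2 = 0] (mod q^3))
     \<and>
     (\<forall>x1 x2 y1 y2 :: int.
        [a2 * x1 = \<kappa>^3 * a1 * x2] (mod q) \<longrightarrow>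
        [\<kappa>^2 * a1 * y1 + a2 * y2 = 0] (mod q) \<longrightarrow>
        [\<kappa>^2 * a1 * x2 * y1 + a2 * x2 * y2 = 0] (mod q) \<longrightarrow>
        [2 * a2 * x1 * y1 + \<kappa>^3 * a1 * x2 * y1 + 3 * \<kappa> * a2 * x2 * y2 = 0] (mod q^2) \<longrightarrow>
        [5 * \<kappa>^2 * a1 * a2 * x1 * y1 + a2^2 * x1 * y2 + \<kappa>^5 * a1^2 * x2 * y1
           + 5 * \<kappa>^3 * a1 * a2 * x2 * y2 = 0] (mod q^3) \<longrightarrow>
        [18 * (a1 * x1^2 * y1^3 + a2 * x2^2 * y2^3) = 0] (mod (q^3 * (gcd y1 (gcd y2 q))^2)))"
  
proof -
  obtain kk :: nat where "Y3 = 2^kk" using Y_pow(3) by blast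
  hence "Y3 \<ge> 1" by simp
  hence qpos: "q > 0" using q_range by simp
  hence q0: "q \<noteq> 0" by simp
  have ckq: "coprime \<kappa> q" using k_cop by (simp add: coprime_iff_gcd_eq_1)
  have caq: "coprime (a1*a2) q" using q_cop by (simp add: coprime_iff_gcd_eq_1 gcd.commute)
  have cop: "coprime (\<kappa>*a1*a2) q" using ckq caq by (simp add: mult.assoc)
  show ?thesis
  proof (intro conjI allI impI ballI)
    fix p assume pS: "p \<in> Sqk a1 a2 a3 X1 X2 X3 Y1 Y2 Y3 q \<kappa>"
    obtain x1 x2 y1 y2 where p: "p = (x1, x2, y1, y2)" by (cases p) auto
    from pS obtain x3 where cg: "[x1 * y1 + \<kappa> * x2 * y2 = 0] (mod q)"
      and s0: "(x1, x2, x3, y1, y2, q) \<in> S0 a1 a2 a3 X1 X2 X3 Y1 Y2 Y3"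
      unfolding p Sqk_def by blast
    from s0 have eq: "a1 * x1^2 * y1^3 + a2 * x2^2 * y2^3 + a3 * x3^2 * q^3 = 0"
      and g: "gcd (x1 * y1) (gcd (x2 * y2) (x3 * q)) = 1"
      unfolding S0_def by auto
    have F0: "a1 * x1^2 * y1^3 + a2 * x2^2 * y2^3 = (-(a3*x3^2))*q^3" using eq by (simp add: algebra_simps)
    have dq: "q dvd x1 * y1 + \<kappa> * (x2 * y2)" using cg by (simp add: cong_0_iff mult.assoc)
    then obtain m where hm: "x1 * y1 + \<kappa> * x2 * y2 = q*m" by (auto simp: mult.assoc)
    have c1: "coprime (x1*y1) q" and c2: "coprime (x2*y2) q"
      using cop_help[OF g dq ckq] by auto
    note r = part1[OF q0 c1 c2 F0 hm]
    show "case p of (x1, x2, y1, y2) \<Rightarrow>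
        [\<kappa>^2 * a1 * x2 * y1 + a2 * x2 * y2 = 0] (mod q) \<and>
        [2 * a2 * x1 * y1 + \<kappa>^3 * a1 * x2 * y1 + 3 * \<kappa> * a2 * x2 * y2 = 0] (mod q^2) \<and>
        [5 * \<kappa>^2 * a1 * a2 * x1 * y1 + a2^2 * x1 * y2 + \<kappa>^5 * a1^2 * x2 * y1
           + 5 * \<kappa>^3 * a1 * a2 * x2 * y2 = 0] (mod q^3)"
      unfolding p using r by (simp add: cong_0_iff)
  next
    fix x1 x2 y1 y2 :: int
    assume h1: "[a2 * x1 = \<kappa>^3 * a1 * x2] (mod q)"
      and h2: "[\<kappa>^2 * a1 * y1 + a2 * y2 = 0] (mod q)"
      and h4: "[2 * a2 * x1 * y1 + \<kappa>^3 * a1 * x2 * y1 + 3 * \<kappa> * a2 * x2 * y2 = 0] (mod q^2)"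
      and h5: "[5 * \<kappa>^2 * a1 * a2 * x1 * y1 + a2^2 * x1 * y2 + \<kappa>^5 * a1^2 * x2 * y1
           + 5 * \<kappa>^3 * a1 * a2 * x2 * y2 = 0] (mod q^3)"
    from h1 obtain m where hm: "a2*x1 - \<kappa>^3*a1*x2 = q*m"
      by (auto simp: cong_iff_dvd_diff)
    from h2 obtain n where hn: "\<kappa>^2*a1*y1 + a2*y2 = q*n"
      by (auto simp: cong_0_iff)
    from h4 obtain c2 where hc2: "2 * a2 * x1 * y1 + \<kappa>^3 * a1 * x2 * y1 + 3 * \<kappa> * a2 * x2 * y2 = q^2*c2"
      by (auto simp: cong_0_iff)
    from h5 obtain c3 where hc3: "5 * \<kappa>^2 * a1 * a2 * x1 * y1 + a2^2 * x1 * y2 + \<kappa>^5 * a1^2 * x2 * y1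
           + 5 * \<kappa>^3 * a1 * a2 * x2 * y2 = q^3*c3"
      by (auto simp: cong_0_iff)
    define F where "F = a1 * x1^2 * y1^3 + a2 * x2^2 * y2^3"
    have dq: "q^3 dvd 2*F" unfolding F_def using part2q[OF q0 cop hm hn hc2 hc3] .
    define r where "r = gcd y1 (gcd y2 q)"
    have r0: "r \<noteq> 0" unfolding r_def using q0 by simp
    have d1: "r dvd y1" unfolding r_def by simp
    have d2: "r dvd y2" unfolding r_def by (meson dvd_trans gcd_dvd1 gcd_dvd2)
    have "r dvd q" unfolding r_def by (meson dvd_trans gcd_dvd2)
    obtain z1 where hy1: "y1 = r*z1" using d1 by (elim dvdE)
    obtain z2 where hy2: "y2 = r*z2" using d2 by (elim dvdE)
    obtain q' where hq: "q = r*q'" using \<open>r dvd q\<close> by (elim dvdE)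
    have copr: "coprime (\<kappa>*a1*a2) r" using cop \<open>r dvd q\<close>
      by (meson coprime_commute coprime_divisors dvd_refl)
    have dr: "r^5 dvd 18*F" unfolding F_def using part2r[OF r0 copr hy1 hy2 hq hm hc2 hc3] .
    have crq: "coprime r q'"
    proof (rule coprimeI)
      fix d assume "d dvd r" "d dvd q'"
      hence "d*d dvd r*q'" by (rule mult_dvd_mono)
      hence "d^2 dvd q" using hq by (simp add: power2_eq_square)
      thus "is_unit d" using q_sqf squarefreeD by blast
    qed
    have "q'^3 dvd q^3" using hq by simp
    moreover have "q^3 dvd 9*(2*F)" using dq by (rule dvd_mult)
    ultimately have "q'^3 dvd 9*(2*F)" by (rule dvd_trans)
    hence d3: "q'^3 dvd 18*F" by simp
    have "coprime (r^5) (q'^3)" using crq by simp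
    hence "r^5 * q'^3 dvd 18*F" using dr d3 by (simp add: divides_mult)
    moreover have "q^3 * r^2 = r^5 * q'^3" unfolding hq by (Groebner_Basis.algebra)
    ultimately show "[18 * (a1 * x1^2 * y1^3 + a2 * x2^2 * y2^3) = 0] (mod (q^3 * (gcd y1 (gcd y2 q))^2))"
      unfolding F_def r_def by (simp add: cong_0_iff)
  qed
qed

end
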